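(* Let $G$ be a finite simple graph on $[d]$, $k\ge1$, and let $f,g$ be $k$-colorings of $G$. Then $f\sim_k g$ if and only if ${\bf x}_f-{\bf x}_g\in\langle [I_G]_2\rangle$.
   Context: A $k$-coloring of a graph $H$ is a map $f:V(H)\to[k]$ (not necessarily surjective) with $f(u)\neq f(v)$ for every edge. A Kempe switching: for colors $i<j$ and a connected component $C$ of $H[f^{-1}(i)\cup f^{-1}(j)]$, interchange $i$ and $j$ on $C$. $f\sim_k g$ (Kempe equivalent) if $g$ is obtained from $f$ by a finite sequence of Kempe switchings. A stable set of $G$ is a subset of $[d]$ with no edge of $G$ (including $\emptyset$ and singletons); $S(G)$ is the set of stable sets; $R[G]=\mathbb{K}[x_S : S\in S(G)]$ over a field $\mathbb{K}$, all variables of degree $1$. For a $k$-coloring $f$ of an induced subgraph $G[W]$, ${\bf x}_f=\prod_{\ell=1}^k x_{f^{-1}(\ell)}$. The stable set ideal $I_G$ is the kernel of the ring map $\pi:R[G]\to\mathbb{K}[t_1,\dots,t_d,s]$, $\pi(x_S)=s\prod_{j\in S}t_j$; a binomial $x_{S_1}\cdots x_{S_r}-x_{T_1}\cdots x_{T_r}$ lies in $I_G$ iff $S_1\cup\dots\cup S_r=T_1\cup\dots\cup T_r$ as multisets. $\langle [I_G]_2\rangle$ denotes the ideal of $R[G]$ generated by the homogeneous elements of degree $2$ of $I_G$ (equivalently, by the quadratic binomials in $I_G$). *)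

theory Defs
  imports "HOL-Library.Poly_Mapping"
begin

definition simple_graph_on :: "nat \<Rightarrow> (nat \<times> nat) set \<Rightarrow> bool" where
  "simple_graph_on d E \<longleftrightarrow> E \<subseteq> {1..d} \<times> {1..d} \<and> sym E \<and> irrefl E"

text \<open>A k-coloring of G (on vertex set {1..d}); values outside the vertex set are fixed to 0
  so that a coloring is determined by its values on the vertices.\<close>
definition coloring :: "nat \<Rightarrow> (nat \<times> nat) set \<Rightarrow> nat \<Rightarrow> (nat \<Rightarrow> nat) \<Rightarrow> bool" where
  "coloring d E k f \<longleftrightarrow> (\<forall>v\<in>{1..d}. f v \<in> {1..k}) \<and> (\<forall>v. v \<notin> {1..d} \<longrightarrow> f v = 0)
      \<and> (\<forall>u v. (u, v) \<in> E \<longrightarrow> f u \<noteq> f v)"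

definition component_of :: "(nat \<times> nat) set \<Rightarrow> nat set \<Rightarrow> nat set \<Rightarrow> bool" where
  "component_of E W C \<longleftrightarrow> (\<exists>v\<in>W. C = {u. (v, u) \<in> (E \<inter> (W \<times> W))\<^sup>*})"

definition kempe_switch :: "nat \<Rightarrow> (nat \<times> nat) set \<Rightarrow> nat \<Rightarrow> (nat \<Rightarrow> nat) \<Rightarrow> (nat \<Rightarrow> nat) \<Rightarrow> bool" where
  "kempe_switch d E k f g \<longleftrightarrow> (\<exists>i j C. 1 \<le> i \<and> i < j \<and> j \<le> k \<and>
      component_of E {v\<in>{1..d}. f v = i \<or> f v = j} C \<and>
      g = (\<lambda>v. if v \<in> C then (if f v = i then j else i) else f v))"

definition kempe_equiv :: "nat \<Rightarrow> (nat \<times> nat) set \<Rightarrow> nat \<Rightarrow> (nat \<Rightarrow> nat) \<Rightarrow> (nat \<Rightarrow> nat) \<Rightarrow> bool" where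
  "kempe_equiv d E k f g \<longleftrightarrow> (kempe_switch d E k)\<^sup>*\<^sup>* f g"

definition stable_set :: "nat \<Rightarrow> (nat \<times> nat) set \<Rightarrow> nat set \<Rightarrow> bool" where
  "stable_set d E S \<longleftrightarrow> S \<subseteq> {1..d} \<and> (\<forall>u\<in>S. \<forall>v\<in>S. (u, v) \<notin> E)"

text \<open>Polynomials over 'k in variables x_S indexed by sets S (monomials = finitely supported
  exponent functions).\<close>
type_synonym 'k spoly = "(nat set \<Rightarrow>\<^sub>0 nat) \<Rightarrow>\<^sub>0 'k"

definition xvar :: "nat set \<Rightarrow> ('k::comm_ring_1) spoly" where
  "xvar S = Poly_Mapping.single (Poly_Mapping.single S 1) 1"

definition in_RG :: "nat \<Rightarrow> (nat \<times> nat) set \<Rightarrow> ('k::comm_ring_1) spoly \<Rightarrow> bool" where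
  "in_RG d E p \<longleftrightarrow> (\<forall>m\<in>Poly_Mapping.keys p. \<forall>S\<in>Poly_Mapping.keys m. stable_set d E S)"

definition xcol :: "nat set \<Rightarrow> nat \<Rightarrow> (nat \<Rightarrow> nat) \<Rightarrow> ('k::comm_ring_1) spoly" where
  "xcol W k f = (\<Prod>l\<in>{1..k}. xvar {v\<in>W. f v = l})"

text \<open>The target ring K[t_1,...,t_d,s]: variables indexed by nat, with s = variable 0 and
  t_j = variable j (1 \<le> j \<le> d).\<close>
type_synonym 'k tpoly = "(nat \<Rightarrow>\<^sub>0 nat) \<Rightarrow>\<^sub>0 'k"

definition tvar :: "nat \<Rightarrow> ('k::comm_ring_1) tpoly" where
  "tvar j = Poly_Mapping.single (Poly_Mapping.single j 1) 1"

definition pi_var :: "nat set \<Rightarrow> ('k::comm_ring_1) tpoly" where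
  "pi_var S = tvar 0 * (\<Prod>j\<in>S. tvar j)"

text \<open>The K-algebra map pi with pi(x_S) = s * prod_{j in S} t_j.\<close>
definition pi_map :: "('k::comm_ring_1) spoly \<Rightarrow> 'k tpoly" where
  "pi_map p = (\<Sum>m\<in>Poly_Mapping.keys p. Poly_Mapping.single 0 (Poly_Mapping.lookup p m) * (\<Prod>S\<in>Poly_Mapping.keys m. pi_var S ^ Poly_Mapping.lookup m S))"

definition stable_set_ideal :: "nat \<Rightarrow> (nat \<times> nat) set \<Rightarrow> ('k::comm_ring_1) spoly set" where
  "stable_set_ideal d E = {p. in_RG d E p \<and> pi_map p = 0}"

definition homogeneous_deg :: "nat \<Rightarrow> ('k::comm_ring_1) spoly \<Rightarrow> bool" where
  "homogeneous_deg n p \<longleftrightarrow> (\<forall>m\<in>Poly_Mapping.keys p. (\<Sum>S\<in>Poly_Mapping.keys m. Poly_Mapping.lookup m S) = n)"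

definition ideal_RG :: "nat \<Rightarrow> (nat \<times> nat) set \<Rightarrow> ('k::comm_ring_1) spoly set \<Rightarrow> 'k spoly set" where
  "ideal_RG d E B = {q. \<exists>F r. finite F \<and> F \<subseteq> B \<and> (\<forall>b\<in>F. in_RG d E (r b)) \<and> q = (\<Sum>b\<in>F. r b * b)}"

definition quad_ideal :: "nat \<Rightarrow> (nat \<times> nat) set \<Rightarrow> ('k::comm_ring_1) spoly set" where
  "quad_ideal d E = ideal_RG d E {p \<in> stable_set_ideal d E. homogeneous_deg 2 p}"

end

theory Submission
  imports Defs
begin


lemma reach_in_W:
  assumes "(v0, u) \<in> (E \<inter> W \<times> W)\<^sup>*" "v0 \<in> W" shows "u \<in> W"
  using assms by (induction rule: rtrancl_induct) auto

lemma coloring_out: "coloring d E k f \<Longrightarrow> v \<notin> {1..d} \<Longrightarrow> f v = 0"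
  unfolding coloring_def by blast

lemma recolor:
  assumes sg: "simple_graph_on d E" and ch: "coloring d E k h"
    and ij: "i \<in> {1..k}" "j \<in> {1..k}" "i \<noteq> j"
  shows "coloring d E k f \<Longrightarrow> (\<forall>v. (f v = i \<or> f v = j) \<longleftrightarrow> (h v = i \<or> h v = j)) \<Longrightarrow>
     (\<forall>v. f v \<noteq> i \<and> f v \<noteq> j \<longrightarrow> h v = f v) \<Longrightarrow> kempe_equiv d E k f h"
proof (induction "card {v. f v \<noteq> h v}" arbitrary: f rule: less_induct)
  case less
  note cf = less.prems(1) and same = less.prems(2) and out = less.prems(3)
  have Esub: "E \<subseteq> {1..d} \<times> {1..d}" and symE: "sym E" using sg by (auto simp: simple_graph_on_def)
  have dsub: "{v. f v \<noteq> h v} \<subseteq> {1..d}"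
  proof
    fix v assume "v \<in> {v. f v \<noteq> h v}"
    show "v \<in> {1..d}"
    proof (rule ccontr)
      assume "v \<notin> {1..d}"
      hence "f v = 0" "h v = 0" using coloring_out[OF cf] coloring_out[OF ch] by blast+
      thus False using \<open>v \<in> {v. f v \<noteq> h v}\<close> by simp
    qed
  qed
  hence fin: "finite {v. f v \<noteq> h v}" by (rule finite_subset) simp
  show ?case
  proof (cases "{v. f v \<noteq> h v} = {}")
    case True
    hence "f = h" by auto
    thus ?thesis by (simp add: kempe_equiv_def)
  next
    case False
    then obtain v0 where v0: "f v0 \<noteq> h v0" by auto
    define a where "a = min i j"
    define b where "b = max i j"
    have ab: "1 \<le> a" "a < b" "b \<le> k" "\<forall>x. (x = a \<or> x = b) \<longleftrightarrow> (x = i \<or> x = j)" using ij unfolding a_def b_def by (auto simp: min_def max_def)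
    define W where "W = {v\<in>{1..d}. f v = a \<or> f v = b}"
    define C where "C = {u. (v0, u) \<in> (E \<inter> W \<times> W)\<^sup>*}"
    have v0d: "v0 \<in> {1..d}" using v0 dsub by auto
    have "f v0 = i \<or> f v0 = j" using out v0 by metis
    hence v0W: "v0 \<in> W" using v0d ab(4) unfolding W_def by blast
    have CW: "C \<subseteq> W" unfolding C_def using reach_in_W[OF _ v0W] by auto
    have diffC0: "h u \<noteq> f u" if "(v0, u) \<in> (E \<inter> W \<times> W)\<^sup>*" for u
      using that
    proof (induction rule: rtrancl_induct)
      case base then show ?case using v0 by simp
    next
      case (step y z)
      have "y \<in> W" "z \<in> W" "(y,z) \<in> E" using step by auto
      hence "f y \<noteq> f z" "h y \<noteq> h z" using cf ch unfolding coloring_def by auto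
      moreover have "f y = a \<or> f y = b" "f z = a \<or> f z = b" using \<open>y \<in> W\<close> \<open>z \<in> W\<close> unfolding W_def by auto
      moreover have "h y = a \<or> h y = b" "h z = a \<or> h z = b" using calculation(3,4) same ab(4) by metis+
      ultimately show ?case using step.IH by metis
    qed
    have diffC: "h u \<noteq> f u" if "u \<in> C" for u using diffC0 that unfolding C_def by blast
    define f1 where "f1 = (\<lambda>v. if v \<in> C then (if f v = a then b else a) else f v)"
    have f1h: "f1 = (\<lambda>v. if v \<in> C then h v else f v)"
    proof
      fix u show "f1 u = (if u \<in> C then h u else f u)"
      proof (cases "u \<in> C")
        case True
        hence "f u = a \<or> f u = b" using CW unfolding W_def by auto
        moreover hence "h u = a \<or> h u = b" using same ab(4) by metis
        ultimately show ?thesis using diffC[OF True] True unfolding f1_def by auto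
      qed (simp add: f1_def)
    qed
    have sw: "kempe_switch d E k f f1"
      unfolding kempe_switch_def component_of_def
      apply (rule exI[of _ a], rule exI[of _ b], rule exI[of _ C])
      using ab v0W unfolding f1_def C_def W_def by blast
    have closedC: "u' \<in> C" if "u \<in> C" "(u,u') \<in> E" "u' \<in> W" for u u'
    proof -
      have "u \<in> W" using that CW by auto
      hence uu: "(u,u') \<in> E \<inter> W \<times> W" using that by auto
      have "(v0,u) \<in> (E \<inter> W \<times> W)\<^sup>*" using that(1) unfolding C_def by simp
      from rtrancl_into_rtrancl[OF this uu] show ?thesis unfolding C_def by simp
    qed
    have cf1: "coloring d E k f1"
      unfolding coloring_def
    proof (intro conjI allI impI ballI)
      fix v assume vd: "v \<in> {1..d}"
      have "h v \<in> {1..k}" "f v \<in> {1..k}" using cf ch vd unfolding coloring_def by blast+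
      thus "f1 v \<in> {1..k}" unfolding f1h by simp
    next
      fix v assume vd: "v \<notin> {1..d}"
      hence "v \<notin> C" using CW unfolding W_def by blast
      thus "f1 v = 0" using coloring_out[OF cf vd] unfolding f1h by simp
    next
      fix u v assume e: "(u,v) \<in> E"
      have e2: "(v,u) \<in> E" using e symE by (meson symE symD)
      have ud: "u \<in> {1..d}" "v \<in> {1..d}" using e Esub by auto
      show "f1 u \<noteq> f1 v"
      proof (cases "u \<in> C"; cases "v \<in> C")
        assume "u \<in> C" "v \<in> C"
        moreover have "h u \<noteq> h v" using ch e unfolding coloring_def by blast
        ultimately show ?thesis unfolding f1h by simp
      next
        assume "u \<notin> C" "v \<notin> C"
        moreover have "f u \<noteq> f v" using cf e unfolding coloring_def by blast
        ultimately show ?thesis unfolding f1h by simp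
      next
        assume u: "u \<in> C" "v \<notin> C"
        hence "v \<notin> W" using closedC e by blast
        hence "f v \<noteq> a \<and> f v \<noteq> b" using ud unfolding W_def by auto
        moreover have "u \<in> W" using u CW by auto
        moreover hence "h u = a \<or> h u = b" using same ab(4) unfolding W_def by blast
        ultimately show ?thesis using u unfolding f1h by auto
      next
        assume u: "u \<notin> C" "v \<in> C"
        hence "u \<notin> W" using closedC e2 by blast
        hence "f u \<noteq> a \<and> f u \<noteq> b" using ud unfolding W_def by auto
        moreover have "v \<in> W" using u CW by auto
        moreover hence "h v = a \<or> h v = b" using same ab(4) unfolding W_def by blast
        ultimately show ?thesis using u unfolding f1h by auto
      qed
    qed
    have same1: "\<forall>v. (f1 v = i \<or> f1 v = j) \<longleftrightarrow> (h v = i \<or> h v = j)"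
      using same unfolding f1h by auto
    have out1: "\<forall>v. f1 v \<noteq> i \<and> f1 v \<noteq> j \<longrightarrow> h v = f1 v"
      using out unfolding f1h by auto
    have "{v. f1 v \<noteq> h v} = {v. f v \<noteq> h v} - C" unfolding f1h using diffC by auto
    moreover have "v0 \<in> C" unfolding C_def by simp
    ultimately have "{v. f1 v \<noteq> h v} \<subset> {v. f v \<noteq> h v}" using v0 by auto
    hence "card {v. f1 v \<noteq> h v} < card {v. f v \<noteq> h v}" using fin psubset_card_mono by blast
    hence "kempe_equiv d E k f1 h" by (rule less.hyps[OF _ cf1 same1 out1])
    thus ?thesis using sw unfolding kempe_equiv_def by (meson converse_rtranclp_into_rtranclp)
  qed
qed


definition cls :: "nat \<Rightarrow> (nat \<Rightarrow> nat) \<Rightarrow> nat \<Rightarrow> nat set" where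
  "cls d f l = {v\<in>{1..d}. f v = l}"

definition Mc :: "nat \<Rightarrow> nat \<Rightarrow> (nat \<Rightarrow> nat) \<Rightarrow> (nat set \<Rightarrow>\<^sub>0 nat)" where
  "Mc d k f = (\<Sum>l\<in>{1..k}. Poly_Mapping.single (cls d f l) 1)"

lemma sum_when_card: "finite A \<Longrightarrow> (\<Sum>l\<in>A. ((1::nat) when P l)) = card {l\<in>A. P l}"
  by (simp add: when_def sum.If_cases Int_def)

lemma lookup_Mc: "Poly_Mapping.lookup (Mc d k f) X = card {l\<in>{1..k}. cls d f l = X}"
  unfolding Mc_def lookup_sum lookup_single by (rule sum_when_card) simp

lemma sum_split2:
  assumes "finite A" "i \<in> A" "j \<in> A" "i \<noteq> j"
  shows "sum h A = h i + h j + sum h (A - {i,j})"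
proof -
  have "sum h A = h i + sum h (A - {i})" using assms by (simp add: sum.remove)
  also have "sum h (A - {i}) = h j + sum h (A - {i} - {j})" using assms by (simp add: sum.remove)
  also have "A - {i} - {j} = A - {i,j}" by auto
  finally show ?thesis by (simp add: add.assoc)
qed

lemma coloring_range: "coloring d E k f \<Longrightarrow> v \<in> {1..d} \<Longrightarrow> f v \<in> {1..k}"
  unfolding coloring_def by blast

lemma coloring_edge: "coloring d E k f \<Longrightarrow> (u,v) \<in> E \<Longrightarrow> f u \<noteq> f v"
  unfolding coloring_def by blast

lemma perm_kempe:
  assumes sg: "simple_graph_on d E" and cg: "coloring d E k g"
  shows "coloring d E k f \<Longrightarrow> Mc d k f = Mc d k g \<Longrightarrow> kempe_equiv d E k f g"
proof (induction "card {l\<in>{1..k}. cls d f l \<noteq> cls d g l}" arbitrary: f rule: less_induct)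
  case less
  note cf = less.prems(1) and eqM = less.prems(2)
  show ?case
  proof (cases "{l\<in>{1..k}. cls d f l \<noteq> cls d g l} = {}")
    case True
    have "f v = g v" for v
    proof (cases "v \<in> {1..d}")
      case True
      hence fv: "f v \<in> {1..k}" using coloring_range[OF cf] by simp
      with \<open>{l\<in>{1..k}. cls d f l \<noteq> cls d g l} = {}\<close> have "cls d f (f v) = cls d g (f v)" by auto
      moreover have "v \<in> cls d f (f v)" using True unfolding cls_def by simp
      ultimately have "v \<in> cls d g (f v)" by simp
      thus ?thesis unfolding cls_def by simp
    next
      case False
      thus ?thesis using coloring_out[OF cf False] coloring_out[OF cg False] by simp
    qed
    hence "f = g" by auto
    thus ?thesis by (simp add: kempe_equiv_def)
  next
    case False
    then obtain l where l: "l \<in> {1..k}" "cls d f l \<noteq> cls d g l" by auto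
    define X where "X = cls d g l"
    have cnt: "card {p\<in>{1..k}. cls d f p = X} = card {p\<in>{1..k}. cls d g p = X}"
      using eqM lookup_Mc by metis
    have "\<exists>m. m\<in>{1..k} \<and> cls d f m = X \<and> cls d f m \<noteq> cls d g m"
    proof (rule ccontr)
      assume nm: "\<not> ?thesis"
      have sub: "{p\<in>{1..k}. cls d f p = X} \<subseteq> {p\<in>{1..k}. cls d g p = X} - {l}"
      proof
        fix p assume p: "p \<in> {p\<in>{1..k}. cls d f p = X}"
        hence "cls d g p = X" using nm by auto
        moreover have "p \<noteq> l" using p l X_def by auto
        ultimately show "p \<in> {p\<in>{1..k}. cls d g p = X} - {l}" using p by auto
      qed
      have "l \<in> {p\<in>{1..k}. cls d g p = X}" using l X_def by auto
      hence "card ({p\<in>{1..k}. cls d g p = X} - {l}) < card {p\<in>{1..k}. cls d g p = X}"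
        by (intro card_Diff1_less) auto
      moreover have "card {p\<in>{1..k}. cls d f p = X} \<le> card ({p\<in>{1..k}. cls d g p = X} - {l})"
        by (rule card_mono[OF _ sub]) auto
      ultimately show False using cnt by simp
    qed
    then obtain m where m: "m\<in>{1..k}" "cls d f m = X" "cls d f m \<noteq> cls d g m" by blast
    have ml: "l \<noteq> m" using m l X_def by auto
    define f' where "f' = (\<lambda>v. if f v = l then m else if f v = m then l else f v)"
    have cf': "coloring d E k f'"
      unfolding coloring_def
    proof (intro conjI allI impI ballI)
      fix v assume vd: "v \<in> {1..d}"
      show "f' v \<in> {1..k}" using coloring_range[OF cf vd] l m unfolding f'_def by auto
    next
      fix v assume vd: "v \<notin> {1..d}"
      show "f' v = 0" using coloring_out[OF cf vd] l m unfolding f'_def by auto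
    next
      fix u v assume e: "(u,v) \<in> E"
      show "f' u \<noteq> f' v" using coloring_edge[OF cf e] ml unfolding f'_def by auto
    qed
    have same: "\<forall>v. (f v = l \<or> f v = m) \<longleftrightarrow> (f' v = l \<or> f' v = m)" unfolding f'_def by auto
    have out: "\<forall>v. f v \<noteq> l \<and> f v \<noteq> m \<longrightarrow> f' v = f v" unfolding f'_def by auto
    have kf: "kempe_equiv d E k f f'" by (rule recolor[OF sg cf' l(1) m(1) ml cf same out])
    have c1: "cls d f' p = cls d f p" if "p \<noteq> l" "p \<noteq> m" for p
      using that unfolding cls_def f'_def by auto
    have c2: "cls d f' l = cls d f m" "cls d f' m = cls d f l"
      using ml unfolding cls_def f'_def by auto
    have "Mc d k f' = Mc d k f"
    proof -
      have "Mc d k f' = Poly_Mapping.single (cls d f' l) 1 + Poly_Mapping.single (cls d f' m) 1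
           + (\<Sum>p\<in>{1..k} - {l,m}. Poly_Mapping.single (cls d f' p) 1)"
        unfolding Mc_def by (rule sum_split2) (use l m ml in auto)
      also have "(\<Sum>p\<in>{1..k} - {l,m}. Poly_Mapping.single (cls d f' p) (1::nat))
          = (\<Sum>p\<in>{1..k} - {l,m}. Poly_Mapping.single (cls d f p) 1)"
        by (rule sum.cong) (auto simp: c1)
      also have "Mc d k f = Poly_Mapping.single (cls d f l) 1 + Poly_Mapping.single (cls d f m) 1
           + (\<Sum>p\<in>{1..k} - {l,m}. Poly_Mapping.single (cls d f p) 1)"
        unfolding Mc_def by (rule sum_split2) (use l m ml in auto)
      ultimately show ?thesis unfolding c2 by (simp add: add_ac)
    qed
    hence eqM': "Mc d k f' = Mc d k g" using eqM by simp
    have sub: "{p\<in>{1..k}. cls d f' p \<noteq> cls d g p} \<subseteq> {p\<in>{1..k}. cls d f p \<noteq> cls d g p} - {l}"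
    proof
      fix p assume p: "p \<in> {p\<in>{1..k}. cls d f' p \<noteq> cls d g p}"
      show "p \<in> {p\<in>{1..k}. cls d f p \<noteq> cls d g p} - {l}"
      proof (cases "p = l")
        case True thus ?thesis using p c2 m X_def by auto
      next
        case False
        show ?thesis
        proof (cases "p = m")
          case True thus ?thesis using p m False by auto
        next
          case False2: False
          thus ?thesis using p c1[OF False False2] False by auto
        qed
      qed
    qed
    have lin: "l \<in> {p\<in>{1..k}. cls d f p \<noteq> cls d g p}" using l by auto
    have fin: "finite {p\<in>{1..k}. cls d f p \<noteq> cls d g p}" by simp
    have c3: "card ({p\<in>{1..k}. cls d f p \<noteq> cls d g p} - {l}) < card {p\<in>{1..k}. cls d f p \<noteq> cls d g p}"
      by (rule card_Diff1_less[OF fin lin])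
    have c4: "card {p\<in>{1..k}. cls d f' p \<noteq> cls d g p} \<le> card ({p\<in>{1..k}. cls d f p \<noteq> cls d g p} - {l})"
      by (rule card_mono[OF _ sub]) simp
    from c3 c4 have "card {p\<in>{1..k}. cls d f' p \<noteq> cls d g p} < card {p\<in>{1..k}. cls d f p \<noteq> cls d g p}"
      by linarith
    hence "kempe_equiv d E k f' g" by (rule less.hyps[OF _ cf' eqM'])
    thus ?thesis using kf unfolding kempe_equiv_def by simp
  qed
qed


definition ind :: "nat set \<Rightarrow> nat \<Rightarrow> nat" where
  "ind X j = (if j \<in> X then 1 else 0)"

definition move :: "nat \<Rightarrow> (nat \<times> nat) set \<Rightarrow> (nat set \<Rightarrow>\<^sub>0 nat) \<Rightarrow> (nat set \<Rightarrow>\<^sub>0 nat) \<Rightarrow> bool" where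
  "move d E M M' \<longleftrightarrow> (\<exists>w A B C D. stable_set d E A \<and> stable_set d E B \<and> stable_set d E C \<and> stable_set d E D
     \<and> (\<forall>j. ind A j + ind B j = ind C j + ind D j)
     \<and> M = w + Poly_Mapping.single A 1 + Poly_Mapping.single B 1
     \<and> M' = w + Poly_Mapping.single C 1 + Poly_Mapping.single D 1)"

lemma step_move:
  assumes sg: "simple_graph_on d E" and cf: "coloring d E k f" and mv: "move d E (Mc d k f) M'"
  shows "\<exists>f'. coloring d E k f' \<and> kempe_equiv d E k f f' \<and> Mc d k f' = M'"
proof -
  obtain w A B C D where sA: "stable_set d E A" and sB: "stable_set d E B"
    and sC: "stable_set d E C" and sD: "stable_set d E D"
    and indeq: "\<forall>j. ind A j + ind B j = ind C j + ind D j"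
    and M: "Mc d k f = w + Poly_Mapping.single A 1 + Poly_Mapping.single B 1"
    and M': "M' = w + Poly_Mapping.single C 1 + Poly_Mapping.single D 1"
    using mv unfolding move_def by blast
  have lk: "card {l\<in>{1..k}. cls d f l = X} = Poly_Mapping.lookup w X + (if A = X then 1 else 0) + (if B = X then 1 else 0)" for X
    using arg_cong[OF M, of "\<lambda>p. Poly_Mapping.lookup p X"] unfolding lookup_Mc
    by (simp add: lookup_add lookup_single when_def)
  have "card {l\<in>{1..k}. cls d f l = A} \<noteq> 0" using lk[of A] by simp
  then obtain i where i: "i \<in> {1..k}" "cls d f i = A" by (metis (mono_tags, lifting) card.empty empty_Collect_eq)
  have "\<exists>j. j \<in> {1..k} \<and> cls d f j = B \<and> j \<noteq> i"
  proof (cases "A = B")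
    case True
    have c2: "card {l\<in>{1..k}. cls d f l = B} \<ge> 2" using lk[of B] True by simp
    have "i \<in> {l\<in>{1..k}. cls d f l = B}" using i True by simp
    hence "card ({l\<in>{1..k}. cls d f l = B} - {i}) \<noteq> 0" using c2 by simp
    then obtain j where "j \<in> {l\<in>{1..k}. cls d f l = B} - {i}" by (metis card.empty ex_in_conv)
    thus ?thesis by auto
  next
    case False
    have "card {l\<in>{1..k}. cls d f l = B} \<noteq> 0" using lk[of B] by simp
    then obtain j where j: "j \<in> {1..k}" "cls d f j = B" by (metis (mono_tags, lifting) card.empty empty_Collect_eq)
    thus ?thesis using i False by auto
  qed
  then obtain j where j: "j \<in> {1..k}" "cls d f j = B" "j \<noteq> i" by blast
  have disjAB: "v \<notin> A \<or> v \<notin> B" for v using i j unfolding cls_def by auto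
  have CDAB: "(v \<in> C \<or> v \<in> D) \<longleftrightarrow> (v \<in> A \<or> v \<in> B)" and disjCD: "\<not> (v \<in> C \<and> v \<in> D)" for v
    using indeq[rule_format, of v] disjAB[of v] unfolding ind_def by (auto split: if_splits)
  have Cd: "C \<subseteq> {1..d}" and Dd: "D \<subseteq> {1..d}" using sC sD unfolding stable_set_def by auto
  define f' where "f' = (\<lambda>v. if v \<in> C then i else if v \<in> D then j else f v)"
  have fA: "f v = i \<longleftrightarrow> v \<in> A" if "v \<in> {1..d}" for v using i that unfolding cls_def by auto
  have fB: "f v = j \<longleftrightarrow> v \<in> B" if "v \<in> {1..d}" for v using j that unfolding cls_def by auto
  have Esub: "E \<subseteq> {1..d} \<times> {1..d}" using sg unfolding simple_graph_on_def by auto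
  have cf': "coloring d E k f'"
    unfolding coloring_def
  proof (intro conjI allI impI ballI)
    fix v assume vd: "v \<in> {1..d}"
    show "f' v \<in> {1..k}" using coloring_range[OF cf vd] i j unfolding f'_def by auto
  next
    fix v assume vd: "v \<notin> {1..d}"
    hence "v \<notin> C" "v \<notin> D" using Cd Dd by auto
    thus "f' v = 0" using coloring_out[OF cf vd] unfolding f'_def by auto
  next
    fix u v assume e: "(u,v) \<in> E"
    have ud: "u \<in> {1..d}" "v \<in> {1..d}" using e Esub by auto
    have nC: "\<not> (u \<in> C \<and> v \<in> C)" using sC e unfolding stable_set_def by auto
    have nD: "\<not> (u \<in> D \<and> v \<in> D)" using sD e unfolding stable_set_def by auto
    have fe: "f u \<noteq> f v" by (rule coloring_edge[OF cf e])
    show "f' u \<noteq> f' v"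
      using nC nD fe CDAB[of u] CDAB[of v] fA[OF ud(1)] fA[OF ud(2)] fB[OF ud(1)] fB[OF ud(2)] j(3)
      unfolding f'_def by auto
  qed
  have same: "\<forall>v. (f v = i \<or> f v = j) \<longleftrightarrow> (f' v = i \<or> f' v = j)"
  proof
    fix v show "(f v = i \<or> f v = j) \<longleftrightarrow> (f' v = i \<or> f' v = j)"
    proof (cases "v \<in> {1..d}")
      case True thus ?thesis using CDAB[of v] fA[OF True] fB[OF True] unfolding f'_def by auto
    next
      case False thus ?thesis using Cd Dd unfolding f'_def by auto
    qed
  qed
  have out: "\<forall>v. f v \<noteq> i \<and> f v \<noteq> j \<longrightarrow> f' v = f v"
  proof (intro allI impI)
    fix v assume nv: "f v \<noteq> i \<and> f v \<noteq> j"
    show "f' v = f v"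
    proof (cases "v \<in> {1..d}")
      case True thus ?thesis using nv CDAB[of v] fA[OF True] fB[OF True] unfolding f'_def by auto
    next
      case False thus ?thesis using Cd Dd unfolding f'_def by auto
    qed
  qed
  have kf: "kempe_equiv d E k f f'" by (rule recolor[OF sg cf' i(1) j(1) j(3)[symmetric] cf same out])
  have c1: "cls d f' p = cls d f p" if "p \<noteq> i" "p \<noteq> j" for p
  proof -
    have "f' v = p \<longleftrightarrow> f v = p" if "v \<in> {1..d}" for v
      using CDAB[of v] fA[OF that] fB[OF that] \<open>p \<noteq> i\<close> \<open>p \<noteq> j\<close> unfolding f'_def by auto
    thus ?thesis unfolding cls_def by auto
  qed
  have c2: "cls d f' i = C" "cls d f' j = D"
  proof -
    have "f' v = i \<longleftrightarrow> v \<in> C" if "v \<in> {1..d}" for v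
      using CDAB[of v] disjCD[of v] fA[OF that] fB[OF that] j(3) unfolding f'_def by auto
    thus "cls d f' i = C" unfolding cls_def using Cd by auto
    have "f' v = j \<longleftrightarrow> v \<in> D" if "v \<in> {1..d}" for v
      using CDAB[of v] disjCD[of v] fA[OF that] fB[OF that] j(3) unfolding f'_def by auto
    thus "cls d f' j = D" unfolding cls_def using Dd by auto
  qed
  define R where "R = (\<Sum>p\<in>{1..k} - {i,j}. Poly_Mapping.single (cls d f p) (1::nat))"
  have Mf: "Mc d k f = Poly_Mapping.single A 1 + Poly_Mapping.single B 1 + R"
    unfolding Mc_def R_def i(2)[symmetric] j(2)[symmetric] by (rule sum_split2) (use i j in auto)
  have "Mc d k f' = Poly_Mapping.single (cls d f' i) 1 + Poly_Mapping.single (cls d f' j) 1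
      + (\<Sum>p\<in>{1..k} - {i,j}. Poly_Mapping.single (cls d f' p) 1)"
    unfolding Mc_def by (rule sum_split2) (use i j in auto)
  also have "(\<Sum>p\<in>{1..k} - {i,j}. Poly_Mapping.single (cls d f' p) (1::nat)) = R"
    unfolding R_def by (rule sum.cong) (auto simp: c1)
  finally have Mf': "Mc d k f' = Poly_Mapping.single C 1 + Poly_Mapping.single D 1 + R" unfolding c2 .
  have "R = w" using M unfolding Mf by (simp add: add_ac)
  hence "Mc d k f' = M'" unfolding Mf' M' by (simp add: add_ac)
  thus ?thesis using cf' kf by blast
qed

lemma reach_move:
  assumes sg: "simple_graph_on d E" and cf: "coloring d E k f"
    and "(move d E)\<^sup>*\<^sup>* (Mc d k f) M"
  shows "\<exists>f'. coloring d E k f' \<and> kempe_equiv d E k f f' \<and> Mc d k f' = M"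
  using assms(3)
proof (induction rule: rtranclp_induct)
  case base thus ?case using cf by (auto simp: kempe_equiv_def)
next
  case (step M1 M2)
  then obtain f1 where f1: "coloring d E k f1" "kempe_equiv d E k f f1" "Mc d k f1 = M1" by blast
  obtain f2 where f2: "coloring d E k f2" "kempe_equiv d E k f1 f2" "Mc d k f2 = M2"
    using step_move[OF sg f1(1)] step.hyps(2) f1(3) by blast
  have "kempe_equiv d E k f f2" using f1(2) f2(2) unfolding kempe_equiv_def by (rule rtranclp_trans)
  thus ?case using f2 by blast
qed


lemma switch_props:
  assumes sg: "simple_graph_on d E" and cf: "coloring d E k f" and sw: "kempe_switch d E k f g"
  shows "coloring d E k g \<and> (\<exists>a b. a \<in> {1..k} \<and> b \<in> {1..k} \<and> a \<noteq> b \<and>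
     (\<forall>v. (f v = a \<or> f v = b) \<longleftrightarrow> (g v = a \<or> g v = b)) \<and> (\<forall>v. f v \<noteq> a \<and> f v \<noteq> b \<longrightarrow> g v = f v))"
proof -
  obtain a b C where ab: "1 \<le> a" "a < b" "b \<le> k"
    and comp: "component_of E {v\<in>{1..d}. f v = a \<or> f v = b} C"
    and g: "g = (\<lambda>v. if v \<in> C then (if f v = a then b else a) else f v)"
    using sw unfolding kempe_switch_def by blast
  define W where "W = {v\<in>{1..d}. f v = a \<or> f v = b}"
  obtain v0 where v0W: "v0 \<in> W" and C: "C = {u. (v0, u) \<in> (E \<inter> W \<times> W)\<^sup>*}"
    using comp unfolding component_of_def W_def by blast
  have Esub: "E \<subseteq> {1..d} \<times> {1..d}" and symE: "sym E" using sg by (auto simp: simple_graph_on_def)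
  have CW: "C \<subseteq> W" unfolding C using reach_in_W[OF _ v0W] by auto
  have closedC: "u' \<in> C" if "u \<in> C" "(u,u') \<in> E" "u' \<in> W" for u u'
  proof -
    have "u \<in> W" using that CW by auto
    hence uu: "(u,u') \<in> E \<inter> W \<times> W" using that by auto
    have "(v0,u) \<in> (E \<inter> W \<times> W)\<^sup>*" using that(1) unfolding C by simp
    from rtrancl_into_rtrancl[OF this uu] show ?thesis unfolding C by simp
  qed
  have fW: "f v = a \<or> f v = b" if "v \<in> C" for v using that CW unfolding W_def by auto
  have cg: "coloring d E k g"
    unfolding coloring_def
  proof (intro conjI allI impI ballI)
    fix v assume vd: "v \<in> {1..d}"
    show "g v \<in> {1..k}" using coloring_range[OF cf vd] ab unfolding g by auto
  next
    fix v assume vd: "v \<notin> {1..d}"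
    hence "v \<notin> C" using CW unfolding W_def by blast
    thus "g v = 0" using coloring_out[OF cf vd] unfolding g by simp
  next
    fix u v assume e: "(u,v) \<in> E"
    have e2: "(v,u) \<in> E" using e symE by (simp add: symD)
    have ud: "u \<in> {1..d}" "v \<in> {1..d}" using e Esub by auto
    have fe: "f u \<noteq> f v" by (rule coloring_edge[OF cf e])
    show "g u \<noteq> g v"
    proof (cases "u \<in> C"; cases "v \<in> C")
      assume "u \<in> C" "v \<in> C"
      thus ?thesis using fW[of u] fW[of v] fe ab unfolding g by auto
    next
      assume "u \<notin> C" "v \<notin> C"
      thus ?thesis using fe unfolding g by simp
    next
      assume u: "u \<in> C" "v \<notin> C"
      hence "v \<notin> W" using closedC e by blast
      hence "f v \<noteq> a \<and> f v \<noteq> b" using ud unfolding W_def by auto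
      thus ?thesis using u fW[of u] unfolding g by auto
    next
      assume u: "u \<notin> C" "v \<in> C"
      hence "u \<notin> W" using closedC e2 by blast
      hence "f u \<noteq> a \<and> f u \<noteq> b" using ud unfolding W_def by auto
      thus ?thesis using u fW[of v] unfolding g by auto
    qed
  qed
  have same: "\<forall>v. (f v = a \<or> f v = b) \<longleftrightarrow> (g v = a \<or> g v = b)"
    using fW ab unfolding g by auto
  have out: "\<forall>v. f v \<noteq> a \<and> f v \<noteq> b \<longrightarrow> g v = f v"
    using fW unfolding g by auto
  have "a \<in> {1..k}" "b \<in> {1..k}" "a \<noteq> b" using ab by auto
  thus ?thesis using cg same out by blast
qed



lemma single_pow:
  "(Poly_Mapping.single (a::'a::comm_monoid_add) (1::'b::comm_semiring_1)) ^ n = Poly_Mapping.single (\<Sum>_\<in>{..<n}. a) 1"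
  by (induction n) (simp_all add: mult_single add.commute)

lemma prod_single:
  "(\<Prod>x\<in>A. Poly_Mapping.single (h x :: 'a::comm_monoid_add) (1::'b::comm_semiring_1)) = Poly_Mapping.single (\<Sum>x\<in>A. h x) 1"
proof (cases "finite A")
  case True thus ?thesis by (induction A rule: finite_induct) (simp_all add: mult_single)
qed simp

lemma xcol_eq: "xcol {1..d} k f = (Poly_Mapping.single (Mc d k f) 1 :: 'k::comm_ring_1 spoly)"
  unfolding xcol_def xvar_def Mc_def cls_def by (rule prod_single)

definition ev :: "nat set \<Rightarrow> (nat \<Rightarrow>\<^sub>0 nat)" where
  "ev S = Poly_Mapping.single 0 1 + (\<Sum>j\<in>S. Poly_Mapping.single j 1)"

lemma pi_var_eq: "(pi_var S :: 'k::comm_ring_1 tpoly) = Poly_Mapping.single (ev S) 1"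
  unfolding pi_var_def tvar_def ev_def by (simp add: prod_single mult_single)

definition Tm :: "(nat set \<Rightarrow>\<^sub>0 nat) \<Rightarrow> (nat \<Rightarrow>\<^sub>0 nat)" where
  "Tm m = (\<Sum>S\<in>Poly_Mapping.keys m. \<Sum>_\<in>{..<Poly_Mapping.lookup m S}. ev S)"

lemma pi_mono: "(\<Prod>S\<in>Poly_Mapping.keys m. (pi_var S :: 'k::comm_ring_1 tpoly) ^ Poly_Mapping.lookup m S) = Poly_Mapping.single (Tm m) 1"
  by (simp add: pi_var_eq single_pow prod_single Tm_def)

lemma pi_map_sup:
  assumes "finite U" "Poly_Mapping.keys p \<subseteq> U"
  shows "(pi_map p :: 'k::comm_ring_1 tpoly) = (\<Sum>m\<in>U. Poly_Mapping.single (Tm m) (Poly_Mapping.lookup p m))"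
proof -
  have "pi_map p = (\<Sum>m\<in>Poly_Mapping.keys p. Poly_Mapping.single (Tm m) (Poly_Mapping.lookup p m))"
    unfolding pi_map_def pi_mono by (simp add: mult_single)
  also have "\<dots> = (\<Sum>m\<in>U. Poly_Mapping.single (Tm m) (Poly_Mapping.lookup p m))"
    by (rule sum.mono_neutral_left[OF assms(1,2)]) (simp add: in_keys_iff)
  finally show ?thesis .
qed

lemma lookup_pi_map:
  "Poly_Mapping.lookup (pi_map p :: 'k::comm_ring_1 tpoly) t = (\<Sum>m\<in>Poly_Mapping.keys p. (Poly_Mapping.lookup p m when Tm m = t))"
  unfolding pi_map_sup[OF finite_keys subset_refl] lookup_sum lookup_single by simp

lemma pi_map_single: "(pi_map (Poly_Mapping.single m c) :: 'k::comm_ring_1 tpoly) = Poly_Mapping.single (Tm m) c"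
  by (subst pi_map_sup[of "{m}"]) auto

lemma pi_map_diff: "(pi_map (p - q) :: 'k::comm_ring_1 tpoly) = pi_map p - pi_map q"
proof -
  let ?U = "Poly_Mapping.keys p \<union> Poly_Mapping.keys q"
  have "Poly_Mapping.keys (p - q) \<subseteq> ?U" by (rule keys_diff)
  thus ?thesis
    by (simp add: pi_map_sup[of ?U] lookup_minus single_diff sum_subtractf)
qed

lemma poly_expand: "p = (\<Sum>m\<in>Poly_Mapping.keys p. Poly_Mapping.single m (Poly_Mapping.lookup p m))"
proof (rule poly_mapping_eqI)
  fix x
  show "Poly_Mapping.lookup p x = Poly_Mapping.lookup (\<Sum>m\<in>Poly_Mapping.keys p. Poly_Mapping.single m (Poly_Mapping.lookup p m)) x"
    unfolding lookup_sum lookup_single by (simp add: when_def in_keys_iff)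
qed

lemma lookup_ev: "finite S \<Longrightarrow> Poly_Mapping.lookup (ev S) x = (if x = 0 then 1 else 0) + ind S x"
  unfolding ev_def ind_def lookup_add lookup_sum lookup_single by (simp add: when_def)

lemma keys_pair: "Poly_Mapping.keys (Poly_Mapping.single A (1::nat) + Poly_Mapping.single B 1) = {A, B}"
  by (auto simp: in_keys_iff lookup_add lookup_single when_def split: if_splits)

lemma Tm_pair: "Tm (Poly_Mapping.single A 1 + Poly_Mapping.single B 1) = ev A + ev B"
proof (cases "A = B")
  case True
  have "Poly_Mapping.single A (1::nat) + Poly_Mapping.single A 1 = Poly_Mapping.single A 2"
    by (metis one_add_one single_add)
  thus ?thesis using True unfolding Tm_def by (simp add: numeral_2_eq_2 mult_2)
next
  case False
  show ?thesis unfolding Tm_def keys_pair using False by (simp add: lookup_add lookup_single)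
qed

lemma deg_pair: "(\<Sum>S\<in>Poly_Mapping.keys (Poly_Mapping.single A (1::nat) + Poly_Mapping.single B 1).
    Poly_Mapping.lookup (Poly_Mapping.single A (1::nat) + Poly_Mapping.single B 1) S) = 2"
  unfolding keys_pair by (cases "A = B") (simp_all add: lookup_add lookup_single)

lemma stable_finite: "stable_set d E S \<Longrightarrow> finite S"
  unfolding stable_set_def using finite_subset by blast

lemma ev_pair_iff:
  assumes "finite A" "finite B" "finite C" "finite D"
  shows "ev A + ev B = ev C + ev D \<longleftrightarrow> (\<forall>j. ind A j + ind B j = ind C j + ind D j)"
proof
  assume h: "ev A + ev B = ev C + ev D"
  show "\<forall>j. ind A j + ind B j = ind C j + ind D j"
  proof
    fix j
    have "Poly_Mapping.lookup (ev A + ev B) j = Poly_Mapping.lookup (ev C + ev D) j" using h by simp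
    thus "ind A j + ind B j = ind C j + ind D j" using assms by (simp add: lookup_add lookup_ev)
  qed
next
  assume h: "\<forall>j. ind A j + ind B j = ind C j + ind D j"
  show "ev A + ev B = ev C + ev D"
  proof (rule poly_mapping_eqI)
    fix j show "Poly_Mapping.lookup (ev A + ev B) j = Poly_Mapping.lookup (ev C + ev D) j"
      using assms h[rule_format, of j] by (simp add: lookup_add lookup_ev)
  qed
qed


lemma sum_zero_keys:
  assumes "finite K" "K \<subseteq> Poly_Mapping.keys (m::'a \<Rightarrow>\<^sub>0 nat)" "(\<Sum>S\<in>K. Poly_Mapping.lookup m S) = 0"
  shows "K = {}"
proof -
  have "\<forall>S\<in>K. Poly_Mapping.lookup m S = 0" using assms(1,3) by simp
  thus ?thesis using assms(2) by (auto simp: in_keys_iff)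
qed

lemma deg2_form:
  assumes deg: "(\<Sum>S\<in>Poly_Mapping.keys m. Poly_Mapping.lookup m S) = (2::nat)"
  shows "\<exists>A B. A \<in> Poly_Mapping.keys m \<and> B \<in> Poly_Mapping.keys m \<and> m = Poly_Mapping.single A 1 + Poly_Mapping.single B 1"
proof -
  have "Poly_Mapping.keys m \<noteq> {}" using deg by auto
  then obtain A where A: "A \<in> Poly_Mapping.keys m" by (meson ex_in_conv)
  have s1: "(\<Sum>S\<in>Poly_Mapping.keys m. Poly_Mapping.lookup m S) = Poly_Mapping.lookup m A + (\<Sum>S\<in>Poly_Mapping.keys m - {A}. Poly_Mapping.lookup m S)"
    using A by (simp add: sum.remove)
  have lA: "Poly_Mapping.lookup m A \<ge> 1" using A by (simp add: in_keys_iff)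
  show ?thesis
  proof (cases "Poly_Mapping.lookup m A = 2")
    case True
    hence "(\<Sum>S\<in>Poly_Mapping.keys m - {A}. Poly_Mapping.lookup m S) = 0" using s1 deg by simp
    hence e: "Poly_Mapping.keys m - {A} = {}" by (intro sum_zero_keys) auto
    have "m = Poly_Mapping.single A 1 + Poly_Mapping.single A 1"
    proof (rule poly_mapping_eqI)
      fix x show "Poly_Mapping.lookup m x = Poly_Mapping.lookup (Poly_Mapping.single A 1 + Poly_Mapping.single A 1) x"
      proof (cases "x = A")
        case True thus ?thesis using \<open>Poly_Mapping.lookup m A = 2\<close> by (simp add: lookup_add)
      next
        case False
        hence "x \<notin> Poly_Mapping.keys m" using e by auto
        thus ?thesis using False by (simp add: lookup_add lookup_single in_keys_iff when_def)
      qed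
    qed
    thus ?thesis using A by blast
  next
    case False
    hence lA1: "Poly_Mapping.lookup m A = 1" using lA s1 deg by linarith
    hence r1: "(\<Sum>S\<in>Poly_Mapping.keys m - {A}. Poly_Mapping.lookup m S) = 1" using s1 deg by simp
    hence "Poly_Mapping.keys m - {A} \<noteq> {}" by (metis sum.empty zero_neq_one)
    then obtain B where B: "B \<in> Poly_Mapping.keys m" "B \<noteq> A" by blast
    have s2: "(\<Sum>S\<in>Poly_Mapping.keys m - {A}. Poly_Mapping.lookup m S) = Poly_Mapping.lookup m B + (\<Sum>S\<in>Poly_Mapping.keys m - {A} - {B}. Poly_Mapping.lookup m S)"
      using B by (simp add: sum.remove)
    have lB: "Poly_Mapping.lookup m B \<ge> 1" using B by (simp add: in_keys_iff)
    hence lB1: "Poly_Mapping.lookup m B = 1" and "(\<Sum>S\<in>Poly_Mapping.keys m - {A} - {B}. Poly_Mapping.lookup m S) = 0"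
      using s2 r1 by linarith+
    hence e: "Poly_Mapping.keys m - {A} - {B} = {}" by (intro sum_zero_keys) auto
    have "m = Poly_Mapping.single A 1 + Poly_Mapping.single B 1"
    proof (rule poly_mapping_eqI)
      fix x show "Poly_Mapping.lookup m x = Poly_Mapping.lookup (Poly_Mapping.single A 1 + Poly_Mapping.single B 1) x"
      proof (cases "x = A \<or> x = B")
        case True thus ?thesis using lA1 lB1 B(2) by (auto simp: lookup_add lookup_single when_def)
      next
        case False
        hence "x \<notin> Poly_Mapping.keys m" using e by auto
        thus ?thesis using False by (auto simp add: lookup_add lookup_single in_keys_iff when_def)
      qed
    qed
    thus ?thesis using A B by blast
  qed
qed

definition phi :: "(nat set \<Rightarrow>\<^sub>0 nat) set \<Rightarrow> ('k::comm_ring_1) spoly \<Rightarrow> 'k" where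
  "phi K p = (\<Sum>m\<in>Poly_Mapping.keys p. (Poly_Mapping.lookup p m when m \<in> K))"

lemma phi_sup:
  assumes "finite U" "Poly_Mapping.keys p \<subseteq> U"
  shows "phi K p = (\<Sum>m\<in>U. (Poly_Mapping.lookup p m when m \<in> K))"
  unfolding phi_def by (rule sum.mono_neutral_left[OF assms]) (simp add: in_keys_iff)

lemma phi_add: "phi K (p + q) = phi K p + phi K q"
proof -
  let ?U = "Poly_Mapping.keys p \<union> Poly_Mapping.keys q"
  have "Poly_Mapping.keys (p + q) \<subseteq> ?U" by (rule keys_add)
  thus ?thesis
    by (simp add: phi_sup[of ?U] lookup_add when_add_distrib sum.distrib)
qed

lemma phi_diff: "phi K (p - q) = phi K p - phi K q"
proof -
  let ?U = "Poly_Mapping.keys p \<union> Poly_Mapping.keys q"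
  have "Poly_Mapping.keys (p - q) \<subseteq> ?U" by (rule keys_diff)
  thus ?thesis
    by (simp add: phi_sup[of ?U] lookup_minus when_diff_distrib sum_subtractf)
qed

lemma phi_zero: "phi K 0 = 0" by (simp add: phi_def)

lemma phi_sum: "phi K (\<Sum>x\<in>F. q x) = (\<Sum>x\<in>F. phi K (q x))"
proof (cases "finite F")
  case True thus ?thesis by (induction F rule: finite_induct) (simp_all add: phi_zero phi_add)
qed (simp add: phi_zero)

lemma phi_single: "phi K (Poly_Mapping.single m c) = (c when m \<in> K)"
  by (subst phi_sup[of "{m}"]) auto


lemma in_RG_zero: "in_RG d E 0" unfolding in_RG_def by simp

lemma in_RG_add:
  assumes "in_RG d E p" "in_RG d E q" shows "in_RG d E (p + q)"
  unfolding in_RG_def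
proof (intro ballI)
  fix m S assume m: "m \<in> Poly_Mapping.keys (p + q)" and S: "S \<in> Poly_Mapping.keys m"
  have "m \<in> Poly_Mapping.keys p \<or> m \<in> Poly_Mapping.keys q" using m keys_add[of p q] by auto
  thus "stable_set d E S" using assms S unfolding in_RG_def by auto
qed

lemma ideal_RG_add:
  assumes "p \<in> ideal_RG d E B" "q \<in> ideal_RG d E B" shows "p + q \<in> ideal_RG d E B"
proof -
  obtain F1 r1 where h1: "finite F1" "F1 \<subseteq> B" "\<forall>b\<in>F1. in_RG d E (r1 b)" "p = (\<Sum>b\<in>F1. r1 b * b)"
    using assms(1) unfolding ideal_RG_def by blast
  obtain F2 r2 where h2: "finite F2" "F2 \<subseteq> B" "\<forall>b\<in>F2. in_RG d E (r2 b)" "q = (\<Sum>b\<in>F2. r2 b * b)"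
    using assms(2) unfolding ideal_RG_def by blast
  define r where "r b = (if b \<in> F1 then r1 b else 0) + (if b \<in> F2 then r2 b else 0)" for b
  have fin: "finite (F1 \<union> F2)" using h1 h2 by simp
  have "(\<Sum>b\<in>F1 \<union> F2. r b * b) = (\<Sum>b\<in>F1 \<union> F2. (if b \<in> F1 then r1 b * b else 0)) + (\<Sum>b\<in>F1 \<union> F2. (if b \<in> F2 then r2 b * b else 0))"
  proof -
    have rb: "r b * b = (if b \<in> F1 then r1 b * b else 0) + (if b \<in> F2 then r2 b * b else 0)" for b
      unfolding r_def by (simp add: distrib_right)
    show ?thesis by (simp only: rb sum.distrib)
  qed
  also have "(\<Sum>b\<in>F1 \<union> F2. (if b \<in> F1 then r1 b * b else 0)) = (\<Sum>b\<in>(F1 \<union> F2) \<inter> F1. r1 b * b)"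
    by (rule sum.inter_restrict[symmetric, OF fin])
  also have "(F1 \<union> F2) \<inter> F1 = F1" by auto
  also have "(\<Sum>b\<in>F1 \<union> F2. (if b \<in> F2 then r2 b * b else 0)) = (\<Sum>b\<in>(F1 \<union> F2) \<inter> F2. r2 b * b)"
    by (rule sum.inter_restrict[symmetric, OF fin])
  also have "(F1 \<union> F2) \<inter> F2 = F2" by auto
  finally have eq: "p + q = (\<Sum>b\<in>F1 \<union> F2. r b * b)" using h1(4) h2(4) by simp
  have "\<forall>b\<in>F1 \<union> F2. in_RG d E (r b)"
    using h1(3) h2(3) unfolding r_def by (auto intro!: in_RG_add simp: in_RG_zero)
  thus ?thesis unfolding ideal_RG_def using eq fin h1(2) h2(2) by blast
qed

lemma zero_in_quad: "0 \<in> quad_ideal d E"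
  unfolding quad_ideal_def ideal_RG_def by (rule CollectI, rule exI[of _ "{}"]) simp

lemma binom_in_quad:
  assumes sA: "stable_set d E A" and sB: "stable_set d E B" and sC: "stable_set d E C" and sD: "stable_set d E D"
    and indeq: "\<forall>j. ind A j + ind B j = ind C j + ind D j"
    and sw: "\<forall>S\<in>Poly_Mapping.keys w. stable_set d E S"
  shows "Poly_Mapping.single (w + Poly_Mapping.single A 1 + Poly_Mapping.single B 1) 1
       - Poly_Mapping.single (w + Poly_Mapping.single C 1 + Poly_Mapping.single D 1) (1::'k::comm_ring_1) \<in> quad_ideal d E"
proof -
  define m1 where "m1 = Poly_Mapping.single A (1::nat) + Poly_Mapping.single B 1"
  define m2 where "m2 = Poly_Mapping.single C (1::nat) + Poly_Mapping.single D 1"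
  define b where "b = Poly_Mapping.single m1 1 - Poly_Mapping.single m2 (1::'k)"
  have kb: "Poly_Mapping.keys b \<subseteq> {m1, m2}" unfolding b_def using keys_diff[of "Poly_Mapping.single m1 (1::'k)" "Poly_Mapping.single m2 1"] by auto
  have inRG: "in_RG d E b" unfolding in_RG_def
  proof (intro ballI)
    fix m S assume m: "m \<in> Poly_Mapping.keys b" and S: "S \<in> Poly_Mapping.keys m"
    from m kb have "m = m1 \<or> m = m2" by auto
    moreover have k1: "Poly_Mapping.keys m1 = {A,B}" unfolding m1_def by (rule keys_pair)
    moreover have k2: "Poly_Mapping.keys m2 = {C,D}" unfolding m2_def by (rule keys_pair)
    ultimately show "stable_set d E S" using S sA sB sC sD by auto
  qed
  have "Tm m1 = Tm m2" unfolding m1_def m2_def Tm_pair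
    using ev_pair_iff[OF stable_finite[OF sA] stable_finite[OF sB] stable_finite[OF sC] stable_finite[OF sD]] indeq by simp
  hence pi0: "(pi_map b :: 'k tpoly) = 0" unfolding b_def pi_map_diff pi_map_single by simp
  have hom: "homogeneous_deg 2 b" unfolding homogeneous_deg_def
  proof
    fix m assume "m \<in> Poly_Mapping.keys b"
    hence "m = m1 \<or> m = m2" using kb by auto
    thus "(\<Sum>S\<in>Poly_Mapping.keys m. Poly_Mapping.lookup m S) = 2"
    proof (elim disjE)
      assume "m = m1" thus ?thesis unfolding m1_def by (simp only: deg_pair)
    next
      assume "m = m2" thus ?thesis unfolding m2_def by (simp only: deg_pair)
    qed
  qed
  have bI: "b \<in> {p \<in> stable_set_ideal d E. homogeneous_deg 2 p}"
    unfolding stable_set_ideal_def using inRG pi0 hom by simp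
  have rRG: "in_RG d E (Poly_Mapping.single w (1::'k))" unfolding in_RG_def using sw by simp
  have "Poly_Mapping.single w 1 * b = Poly_Mapping.single (w + m1) 1 - Poly_Mapping.single (w + m2) (1::'k)"
    unfolding b_def by (simp add: right_diff_distrib mult_single)
  also have "w + m1 = w + Poly_Mapping.single A 1 + Poly_Mapping.single B 1" unfolding m1_def by (simp add: add.assoc)
  also have "w + m2 = w + Poly_Mapping.single C 1 + Poly_Mapping.single D 1" unfolding m2_def by (simp add: add.assoc)
  finally have eq: "Poly_Mapping.single w 1 * b = Poly_Mapping.single (w + Poly_Mapping.single A 1 + Poly_Mapping.single B 1) 1
       - Poly_Mapping.single (w + Poly_Mapping.single C 1 + Poly_Mapping.single D 1) (1::'k)" .
  show ?thesis unfolding quad_ideal_def ideal_RG_def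
    apply (rule CollectI, rule exI[of _ "{b}"], rule exI[of _ "\<lambda>_. Poly_Mapping.single w 1"])
    using bI rRG eq by simp
qed

lemma stable_cls: "coloring d E k f \<Longrightarrow> stable_set d E (cls d f l)"
  unfolding stable_set_def cls_def using coloring_edge by fastforce

lemma twocol:
  assumes cf: "coloring d E k f" and cg: "coloring d E k g"
    and ab: "a \<in> {1..k}" "b \<in> {1..k}" "a \<noteq> b"
    and same: "\<forall>v. (f v = a \<or> f v = b) \<longleftrightarrow> (g v = a \<or> g v = b)"
    and out: "\<forall>v. f v \<noteq> a \<and> f v \<noteq> b \<longrightarrow> g v = f v"
  shows "Poly_Mapping.single (Mc d k f) 1 - Poly_Mapping.single (Mc d k g) (1::'k::comm_ring_1) \<in> quad_ideal d E"
proof -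
  have c1: "cls d g p = cls d f p" if "p \<noteq> a" "p \<noteq> b" for p
  proof -
    have "g v = p \<longleftrightarrow> f v = p" for v
      using same[rule_format, of v] out[rule_format, of v] that by auto
    thus ?thesis unfolding cls_def by auto
  qed
  have indeq: "\<forall>j. ind (cls d f a) j + ind (cls d f b) j = ind (cls d g a) j + ind (cls d g b) j"
  proof
    fix j show "ind (cls d f a) j + ind (cls d f b) j = ind (cls d g a) j + ind (cls d g b) j"
      using same[rule_format, of j] ab(3) unfolding ind_def cls_def by auto
  qed
  define R where "R = (\<Sum>p\<in>{1..k} - {a,b}. Poly_Mapping.single (cls d f p) (1::nat))"
  have Mf: "Mc d k f = R + Poly_Mapping.single (cls d f a) 1 + Poly_Mapping.single (cls d f b) 1"
  proof -
    have "Mc d k f = Poly_Mapping.single (cls d f a) 1 + Poly_Mapping.single (cls d f b) 1 + R"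
      unfolding Mc_def R_def by (rule sum_split2) (use ab in auto)
    thus ?thesis by (simp add: add_ac)
  qed
  have Mg: "Mc d k g = R + Poly_Mapping.single (cls d g a) 1 + Poly_Mapping.single (cls d g b) 1"
  proof -
    have "Mc d k g = Poly_Mapping.single (cls d g a) 1 + Poly_Mapping.single (cls d g b) 1
        + (\<Sum>p\<in>{1..k} - {a,b}. Poly_Mapping.single (cls d g p) 1)"
      unfolding Mc_def by (rule sum_split2) (use ab in auto)
    also have "(\<Sum>p\<in>{1..k} - {a,b}. Poly_Mapping.single (cls d g p) (1::nat)) = R"
      unfolding R_def by (rule sum.cong) (auto simp: c1)
    finally show ?thesis by (simp add: add_ac)
  qed
  have sR: "\<forall>S\<in>Poly_Mapping.keys R. stable_set d E S"
  proof
    fix S assume "S \<in> Poly_Mapping.keys R"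
    moreover have "Poly_Mapping.keys R \<subseteq> (\<Union>p\<in>{1..k} - {a,b}. Poly_Mapping.keys (Poly_Mapping.single (cls d f p) (1::nat)))"
      unfolding R_def by (rule keys_sum)
    ultimately have "S \<in> (\<Union>p\<in>{1..k} - {a,b}. Poly_Mapping.keys (Poly_Mapping.single (cls d f p) (1::nat)))"
      by (rule subsetD[rotated])
    then obtain p where "S \<in> Poly_Mapping.keys (Poly_Mapping.single (cls d f p) (1::nat))" by (rule UN_E)
    hence "S = cls d f p" by simp
    thus "stable_set d E S" using stable_cls[OF cf] by simp
  qed
  show ?thesis unfolding Mf Mg
    by (rule binom_in_quad[OF stable_cls[OF cf] stable_cls[OF cf] stable_cls[OF cg] stable_cls[OF cg] indeq sR])
qed

lemma fwd:
  assumes sg: "simple_graph_on d E" and cf: "coloring d E k f" and ke: "kempe_equiv d E k f g"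
  shows "coloring d E k g \<and> Poly_Mapping.single (Mc d k f) 1 - Poly_Mapping.single (Mc d k g) (1::'k::comm_ring_1) \<in> quad_ideal d E"
  using ke unfolding kempe_equiv_def
proof (induction rule: rtranclp_induct)
  case base thus ?case using cf zero_in_quad by simp
next
  case (step h g)
  have ch: "coloring d E k h" using step.IH by simp
  obtain a b where cg: "coloring d E k g" and ab: "a \<in> {1..k}" "b \<in> {1..k}" "a \<noteq> b"
    and same: "\<forall>v. (h v = a \<or> h v = b) \<longleftrightarrow> (g v = a \<or> g v = b)"
    and out: "\<forall>v. h v \<noteq> a \<and> h v \<noteq> b \<longrightarrow> g v = h v"
    using switch_props[OF sg ch step.hyps(2)] by blast
  have t: "Poly_Mapping.single (Mc d k h) 1 - Poly_Mapping.single (Mc d k g) (1::'k) \<in> quad_ideal d E"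
    by (rule twocol[OF ch cg ab same out])
  have "(Poly_Mapping.single (Mc d k f) 1 - Poly_Mapping.single (Mc d k h) (1::'k))
     + (Poly_Mapping.single (Mc d k h) 1 - Poly_Mapping.single (Mc d k g) (1::'k)) \<in> quad_ideal d E"
    using ideal_RG_add step.IH t unfolding quad_ideal_def by blast
  thus ?case using cg by simp
qed


lemma closure_step:
  assumes bI: "b \<in> stable_set_ideal d E" and hb: "homogeneous_deg 2 b"
    and clos: "\<forall>M M'. M \<in> K \<longrightarrow> move d E M M' \<longrightarrow> M' \<in> K"
    and m0: "m0 \<in> Poly_Mapping.keys b" and m: "m \<in> Poly_Mapping.keys b"
    and T: "Tm m0 = Tm m" and K: "w + m0 \<in> K"
  shows "w + m \<in> K"
proof -
  have rg: "in_RG d E b" using bI unfolding stable_set_ideal_def by simp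
  obtain A B where AB: "A \<in> Poly_Mapping.keys m0" "B \<in> Poly_Mapping.keys m0"
      "m0 = Poly_Mapping.single A 1 + Poly_Mapping.single B 1"
    using deg2_form hb m0 unfolding homogeneous_deg_def by blast
  obtain C D where CD: "C \<in> Poly_Mapping.keys m" "D \<in> Poly_Mapping.keys m"
      "m = Poly_Mapping.single C 1 + Poly_Mapping.single D 1"
    using deg2_form hb m unfolding homogeneous_deg_def by blast
  have sA: "stable_set d E A" and sB: "stable_set d E B" using rg m0 AB unfolding in_RG_def by auto
  have sC: "stable_set d E C" and sD: "stable_set d E D" using rg m CD unfolding in_RG_def by auto
  have "ev A + ev B = ev C + ev D" using T unfolding AB(3) CD(3) Tm_pair .
  hence indeq: "\<forall>j. ind A j + ind B j = ind C j + ind D j"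
    using ev_pair_iff[OF stable_finite[OF sA] stable_finite[OF sB] stable_finite[OF sC] stable_finite[OF sD]] by simp
  have "move d E (w + m0) (w + m)"
    unfolding move_def
    apply (rule exI[of _ w], rule exI[of _ A], rule exI[of _ B], rule exI[of _ C], rule exI[of _ D])
    using sA sB sC sD indeq unfolding AB(3) CD(3) by (simp add: add.assoc)
  thus ?thesis using clos K by blast
qed

lemma phi_mult_zero:
  assumes bI: "b \<in> stable_set_ideal d E" and hb: "homogeneous_deg 2 b"
    and clos: "\<forall>M M'. M \<in> K \<longrightarrow> move d E M M' \<longrightarrow> M' \<in> K"
  shows "phi K (r * (b :: 'k::comm_ring_1 spoly)) = 0"
proof -
  have pi0: "pi_map b = (0 :: 'k tpoly)" using bI unfolding stable_set_ideal_def by simp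
  have inner: "(\<Sum>m\<in>Poly_Mapping.keys b. (Poly_Mapping.lookup b m when w + m \<in> K)) = 0" for w
  proof -
    let ?S = "{m\<in>Poly_Mapping.keys b. w + m \<in> K}"
    have "(\<Sum>m\<in>Poly_Mapping.keys b. (Poly_Mapping.lookup b m when w + m \<in> K)) = sum (Poly_Mapping.lookup b) ?S"
      by (simp add: when_def sum.inter_filter)
    also have "\<dots> = (\<Sum>t\<in>Tm ` ?S. sum (Poly_Mapping.lookup b) {m\<in>?S. Tm m = t})"
      by (rule sum.image_gen) simp
    also have "\<dots> = 0"
    proof (rule sum.neutral, rule ballI)
      fix t assume "t \<in> Tm ` ?S"
      then obtain m0 where m0: "m0 \<in> Poly_Mapping.keys b" "w + m0 \<in> K" "Tm m0 = t" by auto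
      have "{m\<in>?S. Tm m = t} = {m\<in>Poly_Mapping.keys b. Tm m = t}"
      proof (intro set_eqI iffI)
        fix m assume "m \<in> {m\<in>Poly_Mapping.keys b. Tm m = t}"
        hence mk: "m \<in> Poly_Mapping.keys b" "Tm m = t" by auto
        have "w + m \<in> K" using closure_step[OF bI hb clos m0(1) mk(1) _ m0(2)] m0(3) mk(2) by simp
        thus "m \<in> {m\<in>?S. Tm m = t}" using mk by simp
      qed simp
      moreover have "sum (Poly_Mapping.lookup b) {m\<in>Poly_Mapping.keys b. Tm m = t} = Poly_Mapping.lookup (pi_map b :: 'k tpoly) t"
        unfolding lookup_pi_map by (simp add: when_def sum.inter_filter)
      ultimately show "sum (Poly_Mapping.lookup b) {m\<in>?S. Tm m = t} = 0" using pi0 by simp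
    qed
    finally show ?thesis .
  qed
  have "(\<Sum>w\<in>Poly_Mapping.keys r. Poly_Mapping.single w (Poly_Mapping.lookup r w))
        * (\<Sum>m\<in>Poly_Mapping.keys b. Poly_Mapping.single m (Poly_Mapping.lookup b m)) = r * b"
    by (simp only: poly_expand[symmetric])
  hence rb: "r * b = (\<Sum>w\<in>Poly_Mapping.keys r. \<Sum>m\<in>Poly_Mapping.keys b.
       Poly_Mapping.single (w + m) (Poly_Mapping.lookup r w * Poly_Mapping.lookup b m))"
    by (simp add: sum_product mult_single)
  have "phi K (r * b) = (\<Sum>w\<in>Poly_Mapping.keys r. \<Sum>m\<in>Poly_Mapping.keys b.
       (Poly_Mapping.lookup r w * Poly_Mapping.lookup b m when w + m \<in> K))"
    unfolding rb by (simp add: phi_sum phi_single)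
  also have "\<dots> = (\<Sum>w\<in>Poly_Mapping.keys r. Poly_Mapping.lookup r w *
       (\<Sum>m\<in>Poly_Mapping.keys b. (Poly_Mapping.lookup b m when w + m \<in> K)))"
    by (simp add: sum_distrib_left mult_when)
  also have "\<dots> = 0" by (simp add: inner)
  finally show ?thesis .
qed

lemma bwd:
  assumes sg: "simple_graph_on d E" and cf: "coloring d E k f" and cg: "coloring d E k g"
    and q: "Poly_Mapping.single (Mc d k f) 1 - Poly_Mapping.single (Mc d k g) (1::'k::field) \<in> quad_ideal d E"
  shows "kempe_equiv d E k f g"
proof -
  define K where "K = {M. (move d E)\<^sup>*\<^sup>* (Mc d k f) M}"
  have clos: "\<forall>M M'. M \<in> K \<longrightarrow> move d E M M' \<longrightarrow> M' \<in> K"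
    unfolding K_def by (auto intro: rtranclp.rtrancl_into_rtrancl)
  obtain F r where F: "finite F" "F \<subseteq> {p \<in> stable_set_ideal d E. homogeneous_deg 2 p}"
    and qe: "Poly_Mapping.single (Mc d k f) 1 - Poly_Mapping.single (Mc d k g) (1::'k) = (\<Sum>b\<in>F. r b * b)"
    using q unfolding quad_ideal_def ideal_RG_def by blast
  have "phi K (\<Sum>b\<in>F. r b * b) = (\<Sum>b\<in>F. phi K (r b * b))" by (rule phi_sum)
  also have "\<dots> = 0"
  proof (rule sum.neutral, rule ballI)
    fix b assume "b \<in> F"
    hence "b \<in> stable_set_ideal d E" "homogeneous_deg 2 b" using F by auto
    thus "phi K (r b * b) = 0" using phi_mult_zero clos by blast
  qed
  finally have z: "phi K (Poly_Mapping.single (Mc d k f) 1 - Poly_Mapping.single (Mc d k g) (1::'k)) = 0"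
    using qe by simp
  have "Mc d k f \<in> K" unfolding K_def by simp
  hence "1 - ((1::'k) when Mc d k g \<in> K) = 0" using z unfolding phi_diff phi_single by simp
  hence "Mc d k g \<in> K" by (auto simp: when_def split: if_splits)
  hence "(move d E)\<^sup>*\<^sup>* (Mc d k f) (Mc d k g)" unfolding K_def by simp
  then obtain f' where f': "coloring d E k f'" "kempe_equiv d E k f f'" "Mc d k f' = Mc d k g"
    using reach_move[OF sg cf] by blast
  have "kempe_equiv d E k f' g" by (rule perm_kempe[OF sg cg f'(1) f'(3)])
  thus ?thesis using f'(2) unfolding kempe_equiv_def by (rule rtranclp_trans[rotated])
qed

theorem proposition2p3:
  fixes d k :: nat and E :: "(nat \<times> nat) set" and f g :: "nat \<Rightarrow> nat"
  assumes "simple_graph_on d E" and "k \<ge> 1"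
    and "coloring d E k f" and "coloring d E k g"
  shows "kempe_equiv d E k f g \<longleftrightarrow>
         (xcol {1..d} k f - xcol {1..d} k g :: ('k::field) spoly) \<in> quad_ideal d E"
  unfolding xcol_eq using fwd[OF assms(1,3)] bwd[OF assms(1,3,4)] by blast

end
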